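(* Let $r\ge 2$ and $k\ge 2$, let $H=(V,\mathcal{E})$ be an $r$-uniform hypergraph and let $c$ be a Nash equilibrium $k$-coloring of $H$ for the game with CF players. Let $j(e)=|\{v\in e: c(e\setminus\{v\})=c(e)\}|$ for $e\in\mathcal{E}$ and $\hat j=\sum_{e\in\mathcal{E}}j(e)$. Then (1) $\hat j\le \dfrac{|\mathcal{E}|\,r(r-1)}{\frac r2+k-1}$; (2) $SW(c)\ge |\mathcal{E}|\,r\,\dfrac{2k-r}{2k+r-2}$.
   Context: A hypergraph $H=(V,\mathcal{E})$ consists of a finite set $V$ of vertices and a finite set $\mathcal{E}$ of nonempty subsets of $V$; it is $r$-uniform if $|e|=r$ for all $e\in\mathcal{E}$. A $k$-coloring is a map $c:V\to[k]$; for $S\subseteq V$, $c(S)$ is the set of colors of vertices of $S$. $\mathcal{E}(v)=\{e\in\mathcal{E}: v\in e\}$. With CF (conflict-free seeking) players, $u_v(c)=|\{e\in\mathcal{E}(v): |c(e)|=|c(e\setminus\{v\})|+1\}|$, and $SW(c)=\sum_{v\in V}u_v(c)$. A coloring $c$ is a Nash equilibrium if $u_v(c)\ge u_v(c_{-v},i)$ for all $v\in V$, $i\in[k]$, where $(c_{-v},i)$ is $c$ with the color of $v$ replaced by $i$. *)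

theory Defs
  imports Complex_Main
begin

definition hypergraph :: "'a set \<Rightarrow> 'a set set \<Rightarrow> bool" where
  "hypergraph V E \<longleftrightarrow> finite V \<and> (\<forall>e\<in>E. e \<noteq> {} \<and> e \<subseteq> V)"

definition uniform :: "nat \<Rightarrow> 'a set set \<Rightarrow> bool" where
  "uniform r E \<longleftrightarrow> (\<forall>e\<in>E. card e = r)"

definition is_coloring :: "nat \<Rightarrow> 'a set \<Rightarrow> ('a \<Rightarrow> nat) \<Rightarrow> bool" where
  "is_coloring k V c \<longleftrightarrow> (\<forall>v\<in>V. c v \<in> {1..k})"

definition utility :: "'a set set \<Rightarrow> ('a \<Rightarrow> nat) \<Rightarrow> 'a \<Rightarrow> nat" where
  "utility E c v = card {e\<in>E. v \<in> e \<and> card (c ` e) = card (c ` (e - {v})) + 1}"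

definition social_welfare :: "'a set \<Rightarrow> 'a set set \<Rightarrow> ('a \<Rightarrow> nat) \<Rightarrow> nat" where
  "social_welfare V E c = (\<Sum>v\<in>V. utility E c v)"

definition nash_eq :: "nat \<Rightarrow> 'a set \<Rightarrow> 'a set set \<Rightarrow> ('a \<Rightarrow> nat) \<Rightarrow> bool" where
  "nash_eq k V E c \<longleftrightarrow> (\<forall>v\<in>V. \<forall>i\<in>{1..k}. utility E (c(v := i)) v \<le> utility E c v)"

definition jval :: "('a \<Rightarrow> nat) \<Rightarrow> 'a set \<Rightarrow> nat" where
  "jval c e = card {v\<in>e. c ` (e - {v}) = c ` e}"

definition jhat :: "'a set set \<Rightarrow> ('a \<Rightarrow> nat) \<Rightarrow> nat" where
  "jhat E c = (\<Sum>e\<in>E. jval c e)"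

end

theory Submission
  imports Defs
begin

lemma imgA:
  assumes "finite e" "v \<in> e"
  shows "(card (c ` e) = card (c ` (e - {v})) + 1) \<longleftrightarrow> c v \<notin> c ` (e - {v})"
proof -
  have "c ` e = insert (c v) (c ` (e - {v}))" using assms by auto
  thus ?thesis using assms by (simp add: card_insert_if)
qed

lemma img_ins:
  assumes "v \<in> e" shows "c ` e = insert (c v) (c ` (e - {v}))"
  using assms by auto

lemma util_alt:
  assumes "\<forall>e\<in>E. finite e"
  shows "utility E c v = card {e\<in>E. v \<in> e \<and> c v \<notin> c ` (e - {v})}"
  unfolding utility_def
proof (rule arg_cong[where f=card], rule Collect_cong)
  fix e
  show "(e \<in> E \<and> v \<in> e \<and> card (c ` e) = card (c ` (e - {v})) + 1) =
        (e \<in> E \<and> v \<in> e \<and> c v \<notin> c ` (e - {v}))"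
  proof (cases "e \<in> E \<and> v \<in> e")
    case True
    then show ?thesis using imgA[of e v c] assms by simp
  next
    case False
    then show ?thesis by blast
  qed
qed

lemma util_upd:
  assumes "\<forall>e\<in>E. finite e"
  shows "utility E (c(v:=i)) v = card {e\<in>E. v \<in> e \<and> i \<notin> c ` (e - {v})}"
proof -
  have "\<And>e. (c(v:=i)) ` (e - {v}) = c ` (e - {v})" by auto
  thus ?thesis using util_alt[OF assms, of "c(v:=i)" v] by simp
qed

lemma card_filter_sum:
  assumes "finite S"
  shows "card {x\<in>S. P x} = (\<Sum>x\<in>S. if P x then 1 else 0)"
  using sum.inter_filter[OF assms, of "\<lambda>_. (1::nat)" P] by simp

lemma swap_inc:
  fixes f :: "'a set \<Rightarrow> 'a \<Rightarrow> int"
  assumes "finite V" "finite E" "\<forall>e\<in>E. e \<subseteq> V"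
  shows "(\<Sum>v\<in>V. \<Sum>e\<in>{e\<in>E. v \<in> e}. f e v) = (\<Sum>e\<in>E. \<Sum>v\<in>e. f e v)"
proof -
  have "(\<Sum>v\<in>V. \<Sum>e\<in>{e\<in>E. v \<in> e}. f e v) = (\<Sum>v\<in>V. \<Sum>e\<in>E. if v \<in> e then f e v else 0)"
    using assms by (simp add: sum.inter_filter)
  also have "\<dots> = (\<Sum>e\<in>E. \<Sum>v\<in>V. if v \<in> e then f e v else 0)"
    by (rule sum.swap)
  also have "\<dots> = (\<Sum>e\<in>E. \<Sum>v\<in>{v\<in>V. v \<in> e}. f e v)"
    using assms by (simp add: sum.inter_filter)
  also have "\<dots> = (\<Sum>e\<in>E. \<Sum>v\<in>e. f e v)"
    using assms by (intro sum.cong) auto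
  finally show ?thesis .
qed

definition NU :: "('a \<Rightarrow> nat) \<Rightarrow> 'a set \<Rightarrow> 'a set" where
  "NU c e = {v\<in>e. c ` (e - {v}) = c ` e}"

lemma NU_iff:
  assumes "v \<in> e" shows "v \<in> NU c e \<longleftrightarrow> c v \<in> c ` (e - {v})"
proof
  assume "v \<in> NU c e"
  hence "c ` (e - {v}) = c ` e" unfolding NU_def by auto
  thus "c v \<in> c ` (e - {v})" using assms by auto
next
  assume "c v \<in> c ` (e - {v})"
  thus "v \<in> NU c e" using assms unfolding NU_def by (auto simp: img_ins[OF assms])
qed

lemma comb:
  assumes "finite e"
  shows "2 * card (c ` e) + card (NU c e) \<le> 2 * card e"
proof -
  let ?N = "NU c e"
  let ?U = "e - ?N"
  have Ne: "?N \<subseteq> e" unfolding NU_def by auto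
  have fN: "finite ?N" using Ne assms finite_subset by blast
  have "c ` e = c ` ?U \<union> c ` ?N" using Ne by auto
  hence m1: "card (c ` e) \<le> card (c ` ?U) + card (c ` ?N)" using card_Un_le by metis
  have m2: "card (c ` ?U) \<le> card ?U" using assms by (intro card_image_le) auto
  have m: "card (c ` e) \<le> card ?U + card (c ` ?N)" using m1 m2 by linarith
  have cU: "card ?U + card ?N = card e"
    using Ne fN assms card_Diff_subset card_mono by (metis le_add_diff_inverse2)
  have fib: "\<And>x. x \<in> c ` ?N \<Longrightarrow> 2 \<le> card {v\<in>?N. c v = x}"
  proof -
    fix x assume "x \<in> c ` ?N"
    then obtain v where v: "v \<in> ?N" "c v = x" by auto
    have ve: "v \<in> e" using v Ne by auto
    have "c v \<in> c ` (e - {v})" using NU_iff[OF ve] v(1) by (rule iffD1)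
    then obtain w where w: "w \<in> e" "w \<noteq> v" "c w = c v" by (metis DiffE imageE singletonI)
    have "v \<in> e - {w}" using w ve by blast
    hence "c w \<in> c ` (e - {w})" using w by (metis imageI)
    hence wN: "w \<in> ?N" using NU_iff[OF w(1)] by (rule iffD2[rotated])
    have "{v, w} \<subseteq> {v\<in>?N. c v = x}" using v w wN by auto
    moreover have "finite {v\<in>?N. c v = x}" using fN by simp
    ultimately have "card {v, w} \<le> card {v\<in>?N. c v = x}" by (rule card_mono[rotated])
    thus "2 \<le> card {v\<in>?N. c v = x}" using w by simp
  qed
  have eqN: "?N = (\<Union>x\<in>c ` ?N. {v\<in>?N. c v = x})" by auto
  have "card (\<Union>x\<in>c ` ?N. {v\<in>?N. c v = x}) = (\<Sum>x\<in>c ` ?N. card {v\<in>?N. c v = x})"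
    by (rule card_UN_disjoint) (use fN in auto)
  hence cs: "card ?N = (\<Sum>x\<in>c ` ?N. card {v\<in>?N. c v = x})" by (simp only: eqN[symmetric])
  have "(\<Sum>x\<in>c ` ?N. 2) \<le> (\<Sum>x\<in>c ` ?N. card {v\<in>?N. c v = x})" by (rule sum_mono) (rule fib)
  hence h2: "2 * card (c ` ?N) \<le> card ?N" using cs by (simp add: mult.commute)
  show ?thesis using m cU h2 by linarith
qed


lemma sum_if_NU:
  fixes a b :: int
  assumes "finite e" "N \<subseteq> e"
  shows "(\<Sum>v\<in>e. if v \<in> N then a else b) = int (card N) * a + (int (card e) - int (card N)) * b"
proof -
  have "(\<Sum>v\<in>e. if v \<in> N then a else b) = (\<Sum>v\<in>e \<inter> {x. x \<in> N}. a) + (\<Sum>v\<in>e \<inter> - {x. x \<in> N}. b)"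
    by (rule sum.If_cases[OF assms(1)])
  also have "e \<inter> {x. x \<in> N} = N" using assms by auto
  also have "e \<inter> - {x. x \<in> N} = e - N" by auto
  finally have s: "(\<Sum>v\<in>e. if v \<in> N then a else b) = (\<Sum>v\<in>N. a) + (\<Sum>v\<in>e - N. b)" .
  have "card (e - N) = card e - card N" using assms by (simp add: card_Diff_subset finite_subset)
  moreover have "card N \<le> card e" using assms card_mono by blast
  ultimately have "int (card (e - N)) = int (card e) - int (card N)" by simp
  thus ?thesis unfolding s by (simp add: mult.commute)
qed

definition gg :: "('a \<Rightarrow> nat) \<Rightarrow> nat \<Rightarrow> 'a set \<Rightarrow> 'a \<Rightarrow> int" where
  "gg c k e v = (if v \<in> NU c e then int (card (c ` e)) - int k else int (card (c ` e)) - 1)"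

lemma NU_sub: "NU c e \<subseteq> e" unfolding NU_def by auto

lemma edge_bound:
  assumes "finite e" "card e = r"
  shows "2 * (\<Sum>v\<in>e. gg c k e v) \<le> 2 * int r * (int r - 1) - (int r + 2 * int k - 2) * int (card (NU c e))"
proof -
  let ?m = "int (card (c ` e))" and ?j = "int (card (NU c e))"
  have s: "(\<Sum>v\<in>e. gg c k e v) = ?j * (?m - int k) + (int r - ?j) * (?m - 1)"
    unfolding gg_def using sum_if_NU[OF assms(1) NU_sub] assms(2) by simp
  have cb: "2 * ?m + ?j \<le> 2 * int r" using comb[OF assms(1), of c] assms(2) by linarith
  have "int r * (2 * ?m) \<le> int r * (2 * int r - ?j)" using cb by (intro mult_left_mono) auto
  thus ?thesis unfolding s by (simp add: algebra_simps)
qed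

lemma vertex_ineq:
  assumes fE: "finite E" and fin: "\<forall>e\<in>E. finite e"
    and sub: "\<forall>e\<in>{e\<in>E. v \<in> e}. c ` (e - {v}) \<subseteq> {1..k}"
    and ne: "\<forall>i\<in>{1..k}. utility E (c(v:=i)) v \<le> utility E c v"
  shows "0 \<le> (\<Sum>e\<in>{e\<in>E. v \<in> e}. gg c k e v)"
proof -
  let ?Ev = "{e\<in>E. v \<in> e}"
  have fEv: "finite ?Ev" using fE by simp
  have u1: "utility E (c(v:=i)) v = (\<Sum>e\<in>?Ev. if i \<notin> c ` (e - {v}) then 1 else 0)" for i
  proof -
    have "{e\<in>E. v \<in> e \<and> i \<notin> c ` (e - {v})} = {e\<in>?Ev. i \<notin> c ` (e - {v})}" by auto
    hence "utility E (c(v:=i)) v = card {e\<in>?Ev. i \<notin> c ` (e - {v})}" using util_upd[OF fin, of c v i] by simp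
    thus ?thesis using card_filter_sum[OF fEv] by simp
  qed
  have u0: "utility E c v = (\<Sum>e\<in>?Ev. if c v \<notin> c ` (e - {v}) then 1 else 0)"
  proof -
    have "{e\<in>E. v \<in> e \<and> c v \<notin> c ` (e - {v})} = {e\<in>?Ev. c v \<notin> c ` (e - {v})}" by auto
    hence "utility E c v = card {e\<in>?Ev. c v \<notin> c ` (e - {v})}" using util_alt[OF fin, of c v] by simp
    thus ?thesis using card_filter_sum[OF fEv] by simp
  qed
  have "(\<Sum>i\<in>{1..k}. utility E (c(v:=i)) v) \<le> of_nat (card {1..k}) * utility E c v"
    by (rule sum_bounded_above) (use ne in auto)
  hence A: "(\<Sum>i\<in>{1..k}. utility E (c(v:=i)) v) \<le> k * utility E c v" by simp
  have "(\<Sum>i\<in>{1..k}. utility E (c(v:=i)) v) = (\<Sum>i\<in>{1..k}. \<Sum>e\<in>?Ev. if i \<notin> c ` (e - {v}) then 1 else 0)"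
    using u1 by simp
  also have "\<dots> = (\<Sum>e\<in>?Ev. \<Sum>i\<in>{1..k}. if i \<notin> c ` (e - {v}) then 1 else 0)"
    by (rule sum.swap)
  also have "\<dots> = (\<Sum>e\<in>?Ev. k - card (c ` (e - {v})))"
  proof (rule sum.cong[OF refl])
    fix e assume e: "e \<in> ?Ev"
    have S: "c ` (e - {v}) \<subseteq> {1..k}" using sub e by blast
    have "(\<Sum>i\<in>{1..k}. if i \<notin> c ` (e - {v}) then 1 else 0) = card {i\<in>{1..k}. i \<notin> c ` (e - {v})}"
      by (rule card_filter_sum[symmetric]) simp
    also have "{i\<in>{1..k}. i \<notin> c ` (e - {v})} = {1..k} - c ` (e - {v})" by auto
    also have "card \<dots> = k - card (c ` (e - {v}))" using S by (simp add: card_Diff_subset finite_subset)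
    finally show "(\<Sum>i\<in>{1..k}. if i \<notin> c ` (e - {v}) then 1 else 0) = k - card (c ` (e - {v}))" .
  qed
  finally have B: "(\<Sum>e\<in>?Ev. k - card (c ` (e - {v}))) \<le> k * (\<Sum>e\<in>?Ev. if c v \<notin> c ` (e - {v}) then 1 else 0)"
    using A u0 by simp
  have ck: "\<And>e. e \<in> ?Ev \<Longrightarrow> card (c ` (e - {v})) \<le> k"
  proof -
    fix e assume "e \<in> ?Ev"
    hence "c ` (e - {v}) \<subseteq> {1..k}" using sub by blast
    hence "card (c ` (e - {v})) \<le> card {1..k}" by (intro card_mono) auto
    thus "card (c ` (e - {v})) \<le> k" by simp
  qed
  have e1: "int (\<Sum>e\<in>?Ev. k - card (c ` (e - {v}))) = (\<Sum>e\<in>?Ev. int k - int (card (c ` (e - {v}))))"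
    using ck by (simp add: of_nat_diff)
  have e2: "int (k * (\<Sum>e\<in>?Ev. if c v \<notin> c ` (e - {v}) then 1 else 0))
     = (\<Sum>e\<in>?Ev. int k * (if c v \<notin> c ` (e - {v}) then 1 else 0))"
    by (simp add: sum_distrib_left of_nat_sum) (rule sum.cong, auto)
  have B': "int (\<Sum>e\<in>?Ev. k - card (c ` (e - {v}))) \<le> int (k * (\<Sum>e\<in>?Ev. if c v \<notin> c ` (e - {v}) then 1 else 0))"
    using B by (simp only: of_nat_le_iff)
  have C: "(\<Sum>e\<in>?Ev. int k - int (card (c ` (e - {v}))))
     \<le> (\<Sum>e\<in>?Ev. int k * (if c v \<notin> c ` (e - {v}) then 1 else 0))"
    using B' unfolding e1 e2 .
  have "(\<Sum>e\<in>?Ev. gg c k e v) = (\<Sum>e\<in>?Ev. int k * (if c v \<notin> c ` (e - {v}) then 1 else 0)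
        - (int k - int (card (c ` (e - {v})))))"
  proof (rule sum.cong[OF refl])
    fix e assume e: "e \<in> ?Ev"
    hence ve: "v \<in> e" and fe: "finite e" using fin by auto
    show "gg c k e v = int k * (if c v \<notin> c ` (e - {v}) then 1 else 0) - (int k - int (card (c ` (e - {v}))))"
    proof (cases "c v \<in> c ` (e - {v})")
      case True
      hence "v \<in> NU c e" using NU_iff[OF ve] by blast
      hence "c ` (e - {v}) = c ` e" unfolding NU_def by blast
      thus ?thesis using True \<open>v \<in> NU c e\<close> unfolding gg_def by simp
    next
      case False
      hence "v \<notin> NU c e" using NU_iff[OF ve] by blast
      moreover have "card (c ` e) = card (c ` (e - {v})) + 1" using imgA[OF fe ve] False by blast
      ultimately show ?thesis using False unfolding gg_def by simp
    qed
  qed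
  also have "\<dots> = (\<Sum>e\<in>?Ev. int k * (if c v \<notin> c ` (e - {v}) then 1 else 0))
        - (\<Sum>e\<in>?Ev. int k - int (card (c ` (e - {v}))))"
    by (rule sum_subtractf)
  finally show ?thesis using C by linarith
qed

lemma sw_edge:
  assumes "finite e"
  shows "(\<Sum>v\<in>e. (if c v \<notin> c ` (e - {v}) then 1 else 0::int)) = int (card e) - int (card (NU c e))"
proof -
  have "(\<Sum>v\<in>e. (if c v \<notin> c ` (e - {v}) then 1 else 0::int)) = (\<Sum>v\<in>e. if v \<in> NU c e then 0 else 1)"
  proof (rule sum.cong[OF refl])
    fix v assume "v \<in> e"
    from NU_iff[OF this, of c] show "(if c v \<notin> c ` (e - {v}) then 1 else 0::int) = (if v \<in> NU c e then 0 else 1)"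
      by simp
  qed
  also have "\<dots> = int (card e) - int (card (NU c e))"
    using sum_if_NU[OF assms NU_sub] by simp
  finally show ?thesis .
qed


theorem mainTheorem6:
  fixes V :: "'a set" and E :: "'a set set" and c :: "'a \<Rightarrow> nat" and r k :: nat
  assumes "r \<ge> 2" and "k \<ge> 2"
    and "hypergraph V E" and "uniform r E"
    and "is_coloring k V c" and "nash_eq k V E c"
  shows "real (jhat E c) \<le> real (card E) * real r * (real r - 1) / (real r / 2 + real k - 1)
    \<and> real (social_welfare V E c) \<ge>
           real (card E) * real r * (2 * real k - real r) / (2 * real k + real r - 2)"
proof -
  have fV: "finite V" and sub: "\<forall>e\<in>E. e \<subseteq> V" using assms(3) unfolding hypergraph_def by auto
  have fE: "finite E" using sub fV by (meson Pow_iff finite_Pow_iff finite_subset subsetI)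
  have fin: "\<forall>e\<in>E. finite e" using sub fV finite_subset by blast
  have cardr: "\<forall>e\<in>E. card e = r" using assms(4) unfolding uniform_def by blast
  have jv: "\<And>e. jval c e = card (NU c e)" unfolding jval_def NU_def by simp
  have vi: "0 \<le> (\<Sum>e\<in>{e\<in>E. v \<in> e}. gg c k e v)" if v: "v \<in> V" for v
  proof (rule vertex_ineq[OF fE fin])
    show "\<forall>e\<in>{e\<in>E. v \<in> e}. c ` (e - {v}) \<subseteq> {1..k}"
      using sub assms(5) unfolding is_coloring_def by blast
    show "\<forall>i\<in>{1..k}. utility E (c(v:=i)) v \<le> utility E c v"
      using assms(6) v unfolding nash_eq_def by blast
  qed
  have "0 \<le> (\<Sum>v\<in>V. \<Sum>e\<in>{e\<in>E. v \<in> e}. gg c k e v)" using vi by (simp add: sum_nonneg)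
  also have "\<dots> = (\<Sum>e\<in>E. \<Sum>v\<in>e. gg c k e v)" by (rule swap_inc[OF fV fE sub])
  finally have S0: "0 \<le> 2 * (\<Sum>e\<in>E. \<Sum>v\<in>e. gg c k e v)" by simp
  have "2 * (\<Sum>e\<in>E. \<Sum>v\<in>e. gg c k e v) = (\<Sum>e\<in>E. 2 * (\<Sum>v\<in>e. gg c k e v))"
    by (simp add: sum_distrib_left)
  also have "\<dots> \<le> (\<Sum>e\<in>E. 2 * int r * (int r - 1) - (int r + 2 * int k - 2) * int (jval c e))"
  proof (rule sum_mono)
    fix e assume "e \<in> E"
    thus "2 * (\<Sum>v\<in>e. gg c k e v) \<le> 2 * int r * (int r - 1) - (int r + 2 * int k - 2) * int (jval c e)"
      using edge_bound[of e r c k] fin cardr jv by simp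
  qed
  also have "\<dots> = int (card E) * (2 * int r * (int r - 1)) - (int r + 2 * int k - 2) * int (jhat E c)"
    unfolding jhat_def by (simp add: sum_subtractf sum_distrib_left of_nat_sum)
  finally have keyI: "(int r + 2 * int k - 2) * int (jhat E c) \<le> int (card E) * (2 * int r * (int r - 1))"
    using S0 by linarith
  have swI: "int (social_welfare V E c) = int (card E) * int r - int (jhat E c)"
  proof -
    have "int (social_welfare V E c) = (\<Sum>v\<in>V. int (utility E c v))"
      unfolding social_welfare_def by (simp add: of_nat_sum)
    also have "\<dots> = (\<Sum>v\<in>V. \<Sum>e\<in>{e\<in>E. v \<in> e}. (if c v \<notin> c ` (e - {v}) then 1 else 0::int))"
    proof (rule sum.cong[OF refl])
      fix v
      have "{e\<in>E. v \<in> e \<and> c v \<notin> c ` (e - {v})} = {e\<in>{e\<in>E. v \<in> e}. c v \<notin> c ` (e - {v})}" by auto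
      hence "utility E c v = card {e\<in>{e\<in>E. v \<in> e}. c v \<notin> c ` (e - {v})}"
        using util_alt[OF fin, of c v] by simp
      also have "\<dots> = (\<Sum>e\<in>{e\<in>E. v \<in> e}. if c v \<notin> c ` (e - {v}) then 1 else 0)"
        using fE by (intro card_filter_sum) simp
      finally show "int (utility E c v) = (\<Sum>e\<in>{e\<in>E. v \<in> e}. (if c v \<notin> c ` (e - {v}) then 1 else 0::int))"
        by (simp add: of_nat_sum) (rule sum.cong, auto)
    qed
    also have "\<dots> = (\<Sum>e\<in>E. \<Sum>v\<in>e. (if c v \<notin> c ` (e - {v}) then 1 else 0::int))"
      by (rule swap_inc[OF fV fE sub])
    also have "\<dots> = (\<Sum>e\<in>E. int r - int (jval c e))"
    proof (rule sum.cong[OF refl])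
      fix e assume "e \<in> E"
      thus "(\<Sum>v\<in>e. (if c v \<notin> c ` (e - {v}) then 1 else 0::int)) = int r - int (jval c e)"
        using sw_edge[of e c] fin cardr jv by simp
    qed
    also have "\<dots> = int (card E) * int r - int (jhat E c)"
      unfolding jhat_def by (simp add: sum_subtractf of_nat_sum)
    finally show ?thesis .
  qed
  define J where "J = real (jhat E c)"
  define C where "C = real (card E)"
  define R where "R = real r"
  define K where "K = real k"
  have keyR: "(R + 2 * K - 2) * J \<le> C * (2 * R * (R - 1))"
  proof -
    have "real_of_int ((int r + 2 * int k - 2) * int (jhat E c)) \<le> real_of_int (int (card E) * (2 * int r * (int r - 1)))"
      using keyI by (simp only: of_int_le_iff)
    thus ?thesis unfolding J_def C_def R_def K_def by simp
  qed
  have swR: "real (social_welfare V E c) = C * R - J"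
  proof -
    have "real_of_int (int (social_welfare V E c)) = real_of_int (int (card E) * int r - int (jhat E c))"
      using swI by simp
    thus ?thesis unfolding J_def C_def R_def by simp
  qed
  have R2: "R \<ge> 2" and K2: "K \<ge> 2" using assms(1,2) unfolding R_def K_def by simp_all
  have D1: "R / 2 + K - 1 > 0" using R2 K2 by simp
  have D2: "2 * K + R - 2 > 0" using R2 K2 by simp
  have g1: "J \<le> C * R * (R - 1) / (R / 2 + K - 1)"
    using D1 keyR by (simp add: pos_le_divide_eq algebra_simps)
  have g2: "C * R * (2 * K - R) / (2 * K + R - 2) \<le> C * R - J"
  proof -
    have "(C * R - J) * (2 * K + R - 2) - C * R * (2 * K - R) = C * (2 * R * (R - 1)) - (R + 2 * K - 2) * J"
      by (simp add: algebra_simps)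
    hence h: "C * R * (2 * K - R) \<le> (C * R - J) * (2 * K + R - 2)" using keyR by linarith
    show ?thesis using h by (simp add: pos_divide_le_eq[OF D2])
  qed
  show ?thesis using g1 g2 swR unfolding J_def C_def R_def K_def by simp
qed

end
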